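(* Let $N\in\mathbb{Z}^+$ and $\boldsymbol{\mu}\in\mathbb{R}_+^N$ with $0\le\mu[n]\le1$ for all $n$, and suppose $t=\sum_{n=1}^N\mu[n]\ge1$ is not an integer. Define $m_1[n]=\big[\mu[n]-(t-\lfloor t\rfloor)\big]^+$, $m_2[n]=\big[\mu[n]-(\lceil t\rceil-t)\big]^+$ and $$r=\frac{\lfloor t\rfloor(\lceil t\rceil-t)-\sum_{n=1}^N m_1[n]}{t-\sum_{n=1}^N m_1[n]-\sum_{n=1}^N m_2[n]}.$$ Then $r$ is well defined (the denominator is strictly positive) and $0\le r<1$.
   Context: $[x]^+=\max(x,0)$. *)

theory Defs
  imports Complex_Main
begin

definition pospart :: "real \<Rightarrow> real" where
  "pospart x = max x 0"

end

theory Submission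
  imports Defs
begin

lemma card_bound:
  fixes A :: "nat set" and \<mu> :: "nat \<Rightarrow> real" and f g :: real
  assumes A: "A \<subseteq> {1..N}" and fin: "finite {1..N}"
    and nn: "\<And>n. n \<in> {1..N} \<Longrightarrow> 0 \<le> \<mu> n \<and> \<mu> n \<le> 1"
    and fg: "f + g = 1"
  shows "(\<Sum>n\<in>A. \<mu> n - f) \<le> real (card A) * g"
    and "(\<Sum>n\<in>A. \<mu> n - f) \<le> (\<Sum>n=1..N. \<mu> n) - real (card A) * f"
proof -
  have "(\<Sum>n\<in>A. \<mu> n - f) \<le> (\<Sum>n\<in>A. g)"
    by (rule sum_mono) (use A nn fg in force)
  then show "(\<Sum>n\<in>A. \<mu> n - f) \<le> real (card A) * g" by simp
  have "(\<Sum>n\<in>A. \<mu> n) \<le> (\<Sum>n=1..N. \<mu> n)"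
    by (rule sum_mono2) (use A nn in auto)
  then show "(\<Sum>n\<in>A. \<mu> n - f) \<le> (\<Sum>n=1..N. \<mu> n) - real (card A) * f"
    by (simp add: sum_subtractf)
qed

lemma sum_pos_part:
  fixes \<mu> :: "nat \<Rightarrow> real"
  shows "(\<Sum>n=1..N. pospart (\<mu> n - f)) = (\<Sum>n\<in>{n\<in>{1..N}. \<mu> n > f}. \<mu> n - f)"
proof -
  have "(\<Sum>n=1..N. pospart (\<mu> n - f)) = (\<Sum>n\<in>{n\<in>{1..N}. \<mu> n > f}. pospart (\<mu> n - f))"
    by (rule sum.mono_neutral_right) (auto simp: pospart_def)
  also have "\<dots> = (\<Sum>n\<in>{n\<in>{1..N}. \<mu> n > f}. \<mu> n - f)"
    by (rule sum.cong) (auto simp: pospart_def)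
  finally show ?thesis .
qed

theorem lemma5:
  fixes N :: nat and \<mu> :: "nat \<Rightarrow> real" and t :: real
  assumes "N \<ge> 1"
    and "\<And>n. n \<in> {1..N} \<Longrightarrow> 0 \<le> \<mu> n \<and> \<mu> n \<le> 1"
    and "t = (\<Sum>n=1..N. \<mu> n)"
    and "t \<ge> 1"
    and "t \<notin> \<int>"
  shows "let m1 = (\<lambda>n. pospart (\<mu> n - (t - of_int \<lfloor>t\<rfloor>)));
             m2 = (\<lambda>n. pospart (\<mu> n - (of_int \<lceil>t\<rceil> - t)));
             den = t - (\<Sum>n=1..N. m1 n) - (\<Sum>n=1..N. m2 n);
             r = (of_int \<lfloor>t\<rfloor> * (of_int \<lceil>t\<rceil> - t) - (\<Sum>n=1..N. m1 n)) / den
         in den > 0 \<and> 0 \<le> r \<and> r < 1"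
proof -
  note nn = assms(2)
  define K where "K = \<lfloor>t\<rfloor>"
  define f where "f = t - of_int K"
  define g where "g = of_int \<lceil>t\<rceil> - t"
  have ceq: "\<lceil>t\<rceil> = K + 1"
  proof -
    have "t \<noteq> of_int \<lfloor>t\<rfloor>" using assms(5) by (metis Ints_of_int)
    then show ?thesis unfolding K_def by (simp add: ceiling_altdef)
  qed
  have fg: "f + g = 1" using ceq by (simp add: f_def g_def)
  have f0: "f > 0"
  proof -
    have "t \<noteq> of_int K" using assms(5) by auto
    moreover have "of_int K \<le> t" unfolding K_def by simp
    ultimately show ?thesis unfolding f_def by simp
  qed
  have f1: "f < 1" unfolding f_def K_def by linarith
  have K1: "K \<ge> 1" unfolding K_def using assms(4) by linarith
  have tK: "t = of_int K + f" by (simp add: f_def)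
  define S1 where "S1 = (\<Sum>n=1..N. pospart (\<mu> n - f))"
  define S2 where "S2 = (\<Sum>n=1..N. pospart (\<mu> n - g))"
  define A where "A = {n\<in>{1..N}. \<mu> n > f}"
  define B where "B = {n\<in>{1..N}. \<mu> n > g}"
  have S1A: "S1 = (\<Sum>n\<in>A. \<mu> n - f)" unfolding S1_def A_def by (rule sum_pos_part)
  have S2B: "S2 = (\<Sum>n\<in>B. \<mu> n - g)" unfolding S2_def B_def by (rule sum_pos_part)
  have As: "A \<subseteq> {1..N}" unfolding A_def by auto
  have Bs: "B \<subseteq> {1..N}" unfolding B_def by auto
  have A1: "S1 \<le> real (card A) * g" "S1 \<le> t - real (card A) * f"
    using card_bound[OF As finite_atLeastAtMost nn fg] assms(3) unfolding S1A by auto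
  have gf: "g + f = 1" using fg by simp
  have B1: "S2 \<le> real (card B) * f" "S2 \<le> t - real (card B) * g"
    using card_bound[OF Bs finite_atLeastAtMost nn gf] assms(3) unfolding S2B by auto
  have g0: "g > 0" using fg f1 by simp
  have Kg: "of_int K * g = of_int K - of_int K * f"
  proof -
    have "of_int K * (f + g) = of_int K" using fg by simp
    then have "of_int K * f + of_int K * g = of_int K" by (simp only: distrib_left)
    then show ?thesis by linarith
  qed
  have num: "of_int K * g - S1 \<ge> 0"
  proof (cases "int (card A) \<le> K")
    case True
    then have "real (card A) \<le> of_int K" proof -
      have "real_of_int (int (card A)) \<le> real_of_int K" using True by (simp only: of_int_le_iff)
      then show ?thesis by simp
    qed
    moreover have "g > 0" using fg f1 by simp
    ultimately have "real (card A) * g \<le> of_int K * g" by (simp add: mult_right_mono)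
    then show ?thesis using A1(1) by linarith
  next
    case False
    then have "real (card A) \<ge> of_int K + 1"
    proof -
      have "int (card A) \<ge> K + 1" using False by simp
      then have "real_of_int (int (card A)) \<ge> real_of_int (K + 1)" by (simp only: of_int_le_iff)
      then show ?thesis by simp
    qed
    then have "real (card A) * f \<ge> (of_int K + 1) * f" using f0 by (simp add: mult_right_mono)
    then show ?thesis using A1(2) tK Kg by (simp add: distrib_right)
  qed
  have lt: "S2 < t - of_int K * g"
  proof (cases "int (card B) \<le> K")
    case True
    then have "real (card B) \<le> of_int K" proof -
      have "real_of_int (int (card B)) \<le> real_of_int K" using True by (simp only: of_int_le_iff)
      then show ?thesis by simp
    qed
    then have "real (card B) * f \<le> of_int K * f" using f0 by (simp add: mult_right_mono)
    then show ?thesis using B1(1) tK Kg f0 by linarith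
  next
    case False
    then have "real (card B) \<ge> of_int K + 1"
    proof -
      have "int (card B) \<ge> K + 1" using False by simp
      then have "real_of_int (int (card B)) \<ge> real_of_int (K + 1)" by (simp only: of_int_le_iff)
      then show ?thesis by simp
    qed
    moreover have "g > 0" using fg f1 by simp
    ultimately have "real (card B) * g \<ge> (of_int K + 1) * g" by (simp add: mult_right_mono)
    then show ?thesis using B1(2) tK Kg fg f1 by (simp add: distrib_right)
  qed
  have den: "t - S1 - S2 > 0"
  proof -
    define h where "h = (\<lambda>n. \<mu> n - pospart (\<mu> n - f) - pospart (\<mu> n - g))"
    have eq: "t - S1 - S2 = (\<Sum>n=1..N. h n)"
      unfolding h_def S1_def S2_def assms(3) by (simp add: sum_subtractf)
    have hnn: "\<And>n. n \<in> {1..N} \<Longrightarrow> h n \<ge> 0"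
    proof -
      fix n assume a: "n \<in> {1..N}"
      show "h n \<ge> 0" using nn[OF a] fg f0 f1 unfolding h_def pospart_def by (auto simp: max_def)
    qed
    have "\<exists>n\<in>{1..N}. 0 < \<mu> n \<and> \<mu> n < 1"
    proof (rule ccontr)
      assume "\<not> ?thesis"
      then have "\<And>n. n \<in> {1..N} \<Longrightarrow> \<mu> n \<in> \<int>"
        using nn by (metis Ints_0 Ints_1 linorder_not_le order_antisym_conv)
      then have "t \<in> \<int>" unfolding assms(3) by (rule Ints_sum)
      then show False using assms(5) by simp
    qed
    then obtain n where n: "n \<in> {1..N}" "0 < \<mu> n" "\<mu> n < 1" by blast
    have "h n > 0" using n fg f0 f1 unfolding h_def pospart_def by (auto simp: max_def)
    then have "(\<Sum>n=1..N. h n) > 0"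
      using n hnn by (intro sum_pos2[of "{1..N}" n]) auto
    then show ?thesis using eq by simp
  qed
  have r0: "(of_int K * g - S1) / (t - S1 - S2) \<ge> 0" using num den by simp
  have r1: "(of_int K * g - S1) / (t - S1 - S2) < 1" using lt den by (simp add: divide_less_eq)
  show ?thesis
    unfolding Let_def using den r0 r1
    by (simp add: K_def f_def g_def S1_def S2_def)
qed

end
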